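(* Let $n,m\ge 1$ be integers. If there exist Knowlton-Graham partitions of $\{1,\ldots,n\}$ of order $m$, then $\binom{m+1}{2}\le n\le J(m)$, where $J(m)=\sum_{j=1}^m j\lfloor m/j\rfloor$.
   Context: A pair of Knowlton-Graham partitions of $\{1,\ldots,n\}$ consists of two partitions $A_1,\ldots,A_p$ and $B_1,\ldots,B_q$ of $\{1,\ldots,n\}$ into nonempty pairwise disjoint sets such that, for every pair of positive integers $(j,k)$, at most one element of $\{1,\ldots,n\}$ lies both in some $A_i$ with $|A_i|=j$ and in some $B_l$ with $|B_l|=k$. The order of such a pair is the largest of the cardinalities $|A_1|,\ldots,|A_p|,|B_1|,\ldots,|B_q|$. *)

theory Defs
  imports Main "HOL-Library.Disjoint_Sets"
begin

definition KG_pair :: "nat \<Rightarrow> nat set set \<Rightarrow> nat set set \<Rightarrow> bool" where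
  "KG_pair n P Q \<longleftrightarrow>
     partition_on {1..n} P \<and> partition_on {1..n} Q \<and>
     (\<forall>j k::nat. \<forall>x\<in>{1..n}. \<forall>y\<in>{1..n}.
        ((\<exists>A\<in>P. x \<in> A \<and> card A = j) \<and> (\<exists>B\<in>Q. x \<in> B \<and> card B = k) \<and>
         (\<exists>A\<in>P. y \<in> A \<and> card A = j) \<and> (\<exists>B\<in>Q. y \<in> B \<and> card B = k)) \<longrightarrow> x = y)"

definition KG_order :: "nat set set \<Rightarrow> nat set set \<Rightarrow> nat" where
  "KG_order P Q = Max (card ` (P \<union> Q))"

definition J :: "nat \<Rightarrow> nat" where
  "J m = (\<Sum>j=1..m. j * (m div j))"

end

theory Submission
  imports Defs
begin

definition blk :: "nat set set \<Rightarrow> nat \<Rightarrow> nat set" where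
  "blk P x = (THE B. B \<in> P \<and> x \<in> B)"

lemma part_eq:
  assumes "partition_on S P" "A \<in> P" "B \<in> P" "x \<in> A" "x \<in> B"
  shows "A = B"
proof (rule ccontr)
  assume "A \<noteq> B"
  then have "A \<inter> B = {}" using disjointD[OF partition_onD2[OF assms(1)] assms(2,3)] by simp
  then show False using assms(4,5) by blast
qed

lemma blk_uniq:
  assumes "partition_on {1..n} P" "B \<in> P" "x \<in> B"
  shows "blk P x = B"
  unfolding blk_def
proof (rule the_equality)
  show "B \<in> P \<and> x \<in> B" using assms by simp
  fix C assume "C \<in> P \<and> x \<in> C"
  then show "C = B" using part_eq[OF assms(1)] assms(2,3) by blast
qed

lemma blk_mem:
  assumes "partition_on {1..n} P" "x \<in> {1..n}"
  shows "blk P x \<in> P \<and> x \<in> blk P x"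
proof -
  obtain B where "B \<in> P" "x \<in> B" using partition_onD1[OF assms(1)] assms(2) by blast
  then show ?thesis using blk_uniq[OF assms(1)] by auto
qed

lemma blk_sub:
  assumes "partition_on {1..n} P" "B \<in> P"
  shows "B \<subseteq> {1..n}"
  using partition_onD1[OF assms(1)] assms(2) by blast

lemma KG_blk:
  assumes "KG_pair n P Q" "x \<in> {1..n}" "y \<in> {1..n}"
    "card (blk P x) = card (blk P y)" "card (blk Q x) = card (blk Q y)"
  shows "x = y"
proof -
  have pp: "partition_on {1..n} P" "partition_on {1..n} Q" using assms(1) unfolding KG_pair_def by auto
  note a = blk_mem[OF pp(1) assms(2)] blk_mem[OF pp(1) assms(3)] blk_mem[OF pp(2) assms(2)] blk_mem[OF pp(2) assms(3)]
  have "\<forall>j k::nat. \<forall>x\<in>{1..n}. \<forall>y\<in>{1..n}.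
        ((\<exists>A\<in>P. x \<in> A \<and> card A = j) \<and> (\<exists>B\<in>Q. x \<in> B \<and> card B = k) \<and>
         (\<exists>A\<in>P. y \<in> A \<and> card A = j) \<and> (\<exists>B\<in>Q. y \<in> B \<and> card B = k)) \<longrightarrow> x = y"
    using assms(1) unfolding KG_pair_def by blast
  note H = this[rule_format, of x y "card (blk P x)" "card (blk Q x)"]
  have c1: "\<exists>A\<in>P. x \<in> A \<and> card A = card (blk P x)" using a by blast
  have c2: "\<exists>B\<in>Q. x \<in> B \<and> card B = card (blk Q x)" using a by blast
  have c3: "\<exists>A\<in>P. y \<in> A \<and> card A = card (blk P x)" using a assms(4) by auto
  have c4: "\<exists>B\<in>Q. y \<in> B \<and> card B = card (blk Q x)" using a assms(5) by auto
  show ?thesis using H assms(2,3) c1 c2 c3 c4 by blast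
qed

lemma KG_sym: "KG_pair n P Q \<Longrightarrow> KG_pair n Q P"
  unfolding KG_pair_def by blast

lemma lower_aux:
  assumes kg: "KG_pair n P Q" and A: "A \<in> P" and cA: "card A = m"
    and bnd: "\<And>B. B \<in> Q \<Longrightarrow> card B \<le> m" and m1: "m \<ge> 1"
  shows "(m + 1) choose 2 \<le> n"
proof -
  have pp: "partition_on {1..n} P" "partition_on {1..n} Q" using kg unfolding KG_pair_def by auto
  have As: "A \<subseteq> {1..n}" using blk_sub[OF pp(1) A] .
  have finA: "finite A" using As finite_subset by blast
  have injA: "inj_on (\<lambda>x. card (blk Q x)) A"
  proof (rule inj_onI)
    fix x y assume "x \<in> A" "y \<in> A" "card (blk Q x) = card (blk Q y)"
    moreover have "blk P x = A" "blk P y = A" using blk_uniq[OF pp(1) A] \<open>x \<in> A\<close> \<open>y \<in> A\<close> by auto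
    ultimately show "x = y" using KG_blk[OF kg, of x y] As \<open>x \<in> A\<close> \<open>y \<in> A\<close> by (metis subsetD)
  qed
  have img: "(\<lambda>x. card (blk Q x)) ` A \<subseteq> {1..m}"
  proof
    fix k assume "k \<in> (\<lambda>x. card (blk Q x)) ` A"
    then obtain x where x: "x \<in> A" "k = card (blk Q x)" by auto
    have b: "blk Q x \<in> Q" "x \<in> blk Q x" using blk_mem[OF pp(2)] x As by auto
    have "finite (blk Q x)" using blk_sub[OF pp(2) b(1)] finite_subset by blast
    then have "card (blk Q x) \<ge> 1" using b(2) by (metis One_nat_def Suc_leI card_gt_0_iff empty_iff)
    then show "k \<in> {1..m}" using bnd b x by auto
  qed
  have imgeq: "(\<lambda>x. card (blk Q x)) ` A = {1..m}"
  proof (rule card_subset_eq)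
    show "finite {1..m}" by simp
    show "(\<lambda>x. card (blk Q x)) ` A \<subseteq> {1..m}" by (rule img)
    have "card ((\<lambda>x. card (blk Q x)) ` A) = card A" by (rule card_image[OF injA])
    then show "card ((\<lambda>x. card (blk Q x)) ` A) = card {1..m}" using cA by simp
  qed
  have injA': "inj_on (card \<circ> blk Q) A" using injA unfolding comp_def .
  have injC: "inj_on card (blk Q ` A)" by (rule inj_on_imageI[OF injA'])
  have QA: "blk Q ` A \<subseteq> Q"
  proof (rule image_subsetI)
    fix x assume "x \<in> A"
    then have "x \<in> {1..n}" using As by blast
    then show "blk Q x \<in> Q" using blk_mem[OF pp(2)] by simp
  qed
  have disj: "pairwise disjnt (blk Q ` A)"
    by (rule pairwise_subset[OF partition_onD2[OF pp(2)] QA])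
  have subU: "\<Union>(blk Q ` A) \<subseteq> {1..n}"
  proof (rule Union_least)
    fix B assume "B \<in> blk Q ` A"
    then have "B \<in> Q" using QA by blast
    then show "B \<subseteq> {1..n}" by (rule blk_sub[OF pp(2)])
  qed
  have finB: "\<And>B. B \<in> blk Q ` A \<Longrightarrow> finite B"
  proof -
    fix B assume "B \<in> blk Q ` A"
    then have "B \<in> Q" using QA by blast
    then have "B \<subseteq> {1..n}" by (rule blk_sub[OF pp(2)])
    then show "finite B" by (rule finite_subset) simp
  qed
  have "card (\<Union>(blk Q ` A)) = sum card (blk Q ` A)"
    using card_Union_disjoint[OF disj finB] by simp
  also have "\<dots> = sum id (card ` blk Q ` A)"
    using sum.reindex[OF injC, of id] by simp
  also have "card ` blk Q ` A = {1..m}" using imgeq by (simp add: image_image)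
  also have "sum id {1..m} = sum id {0..m}" by (simp add: sum.atLeast_Suc_atMost)
  also have "\<dots> = m * Suc m div 2" using gauss_sum_nat[of m] by simp
  finally have "card (\<Union>(blk Q ` A)) = m * Suc m div 2" .
  moreover have "card (\<Union>(blk Q ` A)) \<le> n" using card_mono[OF _ subU] by simp
  moreover have "(m + 1) choose 2 = m * Suc m div 2" by (simp add: choose_two mult.commute)
  ultimately show ?thesis by simp
qed

lemma upper_aux:
  assumes kg: "KG_pair n P Q" and bnd: "\<And>B. B \<in> P \<union> Q \<Longrightarrow> card B \<le> m"
  shows "n \<le> J m"
proof -
  have pp: "partition_on {1..n} P" "partition_on {1..n} Q" using kg unfolding KG_pair_def by auto
  have finP: "finite P" using finite_elements[OF _ pp(1)] by simp
  have finb: "\<And>B. B \<in> P \<Longrightarrow> finite B" using blk_sub[OF pp(1)] finite_subset by blast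
  have finbQ: "\<And>B. B \<in> Q \<Longrightarrow> finite B" using blk_sub[OF pp(2)] finite_subset by blast
  have pos: "\<And>B. B \<in> P \<Longrightarrow> card B \<ge> 1"
    using finb partition_onD3[OF pp(1)] by (metis One_nat_def Suc_leI card_gt_0_iff)
  have posQ: "\<And>B. B \<in> Q \<Longrightarrow> card B \<ge> 1"
    using finbQ partition_onD3[OF pp(2)] by (metis One_nat_def Suc_leI card_gt_0_iff)
  define S where "S j = \<Union>{A\<in>P. card A = j}" for j
  have cardS: "card (S j) = j * card {A\<in>P. card A = j}" for j
  proof -
    have "pairwise disjnt {A\<in>P. card A = j}"
      using partition_onD2[OF pp(1)] unfolding disjoint_def pairwise_def disjnt_def by auto
    then have "card (S j) = sum card {A\<in>P. card A = j}"
      unfolding S_def by (rule card_Union_disjoint) (use finb in auto)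
    also have "\<dots> = sum (\<lambda>_. j) {A\<in>P. card A = j}" by (rule sum.cong) auto
    finally show ?thesis by simp
  qed
  have Ssub: "S j \<subseteq> {1..n}" for j unfolding S_def using blk_sub[OF pp(1)] by blast
  have Sle: "card (S j) \<le> m" for j
  proof -
    have "inj_on (\<lambda>x. card (blk Q x)) (S j)"
    proof (rule inj_onI)
      fix x y assume xy: "x \<in> S j" "y \<in> S j" "card (blk Q x) = card (blk Q y)"
      then obtain A B where "A \<in> P" "card A = j" "x \<in> A" "B \<in> P" "card B = j" "y \<in> B"
        unfolding S_def by auto
      then have "card (blk P x) = card (blk P y)" using blk_uniq[OF pp(1)] by simp
      then show "x = y" using KG_blk[OF kg] xy Ssub by blast
    qed
    moreover have "(\<lambda>x. card (blk Q x)) ` (S j) \<subseteq> {1..m}"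
    proof
      fix k assume "k \<in> (\<lambda>x. card (blk Q x)) ` (S j)"
      then obtain x where x: "x \<in> S j" "k = card (blk Q x)" by auto
      have "x \<in> {1..n}" using x(1) Ssub[of j] by blast
      then have b: "blk Q x \<in> Q" using blk_mem[OF pp(2)] by simp
      show "k \<in> {1..m}" using bnd[of "blk Q x"] posQ[OF b] b x by auto
    qed
    ultimately have "card (S j) \<le> card {1..m}" by (rule card_inj_on_le) simp
    then show ?thesis by simp
  qed
  have Sj: "card (S j) \<le> j * (m div j)" for j
  proof (cases "j = 0")
    case True then show ?thesis using cardS by simp
  next
    case False
    have "card {A\<in>P. card A = j} = (j * card {A\<in>P. card A = j}) div j" using False by simp
    also have "\<dots> \<le> m div j" using Sle[of j] cardS[of j] by (intro div_le_mono) simp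
    finally show ?thesis using cardS[of j] by simp
  qed
  have cov: "{1..n} = (\<Union>j\<in>{1..m}. S j)"
  proof
    show "{1..n} \<subseteq> (\<Union>j\<in>{1..m}. S j)"
    proof
      fix x assume x: "x \<in> {1..n}"
      have b: "blk P x \<in> P" "x \<in> blk P x" using blk_mem[OF pp(1) x] by auto
      then have "x \<in> S (card (blk P x))" unfolding S_def by blast
      moreover have "card (blk P x) \<in> {1..m}" using pos[OF b(1)] bnd[of "blk P x"] b by auto
      ultimately show "x \<in> (\<Union>j\<in>{1..m}. S j)" by blast
    qed
  qed (use Ssub in blast)
  have "n = card (\<Union>j\<in>{1..m}. S j)" using cov[symmetric] by simp
  also have "\<dots> = (\<Sum>j\<in>{1..m}. card (S j))"
  proof (rule card_UN_disjoint)
    show "\<forall>i\<in>{1..m}. finite (S i)" using Ssub finite_subset by blast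
    show "\<forall>i\<in>{1..m}. \<forall>j\<in>{1..m}. i \<noteq> j \<longrightarrow> S i \<inter> S j = {}"
      unfolding S_def using blk_uniq[OF pp(1)] by blast
  qed simp
  also have "\<dots> \<le> (\<Sum>j\<in>{1..m}. j * (m div j))" by (rule sum_mono) (rule Sj)
  finally show ?thesis unfolding J_def .
qed

theorem theorem1:
  fixes n m :: nat
  assumes "n \<ge> 1" and "m \<ge> 1"
    and "\<exists>P Q. KG_pair n P Q \<and> KG_order P Q = m"
  shows "(m + 1) choose 2 \<le> n \<and> n \<le> J m"
proof -
  obtain P Q where kg: "KG_pair n P Q" and ord: "KG_order P Q = m" using assms(3) by blast
  have pp: "partition_on {1..n} P" "partition_on {1..n} Q" using kg unfolding KG_pair_def by auto
  have fin: "finite (card ` (P \<union> Q))"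
    using finite_elements[OF _ pp(1)] finite_elements[OF _ pp(2)] by simp
  have ne: "P \<noteq> {}" using partition_onD1[OF pp(1)] assms(1) by auto
  have bnd: "\<And>B. B \<in> P \<union> Q \<Longrightarrow> card B \<le> m"
    using ord fin unfolding KG_order_def by auto
  obtain A where A: "A \<in> P \<union> Q" "card A = m"
  proof -
    have "card ` (P \<union> Q) \<noteq> {}" using ne by simp
    from Max_in[OF fin this] ord have "m \<in> card ` (P \<union> Q)"
      unfolding KG_order_def by simp
    then obtain A where "A \<in> P \<union> Q" "m = card A" by (rule imageE)
    then show ?thesis using that by simp
  qed
  have low: "(m + 1) choose 2 \<le> n"
  proof (cases "A \<in> P")
    case True
    then show ?thesis using lower_aux[OF kg True A(2) _ assms(2)] bnd by blast
  next
    case False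
    then have "A \<in> Q" using A by blast
    then show ?thesis using lower_aux[OF KG_sym[OF kg] _ A(2) _ assms(2)] bnd by blast
  qed
  show ?thesis using low upper_aux[OF kg bnd] by blast
qed

end
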